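(* Let $n$ be a nonnegative integer and $a,c\in\mathbb{C}$ such that all series below are defined (no lower parameter zero or a negative integer). Then \[ {}_3F_2\!\left(\left.{-n,\frac{a}{2},\frac{a+1}{2} \atop a,c}\right| 4\right) =(-1)^n\,{}_3F_2\!\left(\left.{-n,\frac{2c-a-n-1}{2},\frac{2c-a-n}{2} \atop 2c-a-n-1,c}\right| 4\right). \] Equivalently, with $Q_n(a,c)=(1+a-c)_n(c)_n\,{}_3F_2\!\left(\left.{-n,\frac{a}{2},\frac{a+1}{2} \atop a,c}\right| 4\right)$ one has $Q_n(a,c)=Q_n(2c-a-n-1,c)$, and the function $W_n(x,y)=Q_n\!\left(x,\frac{1+x+y+n}{2}\right)$ satisfies $W_n(x,y)=W_n(y,x)$.
   Context: For $a\in\mathbb{C}$, $(a)_0=1$ and $(a)_k=a(a+1)\cdots(a+k-1)$ for $k\ge1$. The hypergeometric series is ${}_rF_s\!\left(\left.{\alpha_1,\ldots,\alpha_r\atop \beta_1,\ldots,\beta_s}\right|z\right)=\sum_{k\ge0}\frac{(\alpha_1)_k\cdots(\alpha_r)_k}{k!(\beta_1)_k\cdots(\beta_s)_k}z^k$, with no lower parameter zero or a negative integer; when an upper parameter is $-n$ it is a finite sum over $0\le k\le n$. *)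

theory Defs
  imports Complex_Main
begin

text \<open>When an upper
parameter is a nonpositive integer -n, all terms with k > n vanish, so this is
the finite sum over 0 \<le> k \<le> n.\<close>

definition hyperg :: "complex list \<Rightarrow> complex list \<Rightarrow> complex \<Rightarrow> complex" where
  "hyperg as bs z =
     (\<Sum>k. (\<Prod>a\<leftarrow>as. pochhammer a k) /
            (fact k * (\<Prod>b\<leftarrow>bs. pochhammer b k)) * z ^ k)"

end

theory Submission
  imports Defs
begin

definition PP :: "nat \<Rightarrow> complex \<Rightarrow> complex \<Rightarrow> complex" where
  "PP n a c = (\<Sum>k\<le>n. (-1)^k * of_nat (n choose k) * pochhammer (a + of_nat k) k
                 * pochhammer (c + of_nat k) (n - k))"

lemma PP_rec:
  "PP (Suc n) a c = (c + of_nat n) * PP n a c - 2 * (c + of_nat n) * PP n (a+1) c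
                    - (1 + a - 2*c) * PP n (a+1) (c+1)"
proof -
  define g where "g k = (-1)^k * of_nat (n choose k) * pochhammer (a + of_nat k) k
                 * pochhammer (c + of_nat k) (Suc n - k)" for k
  define h where "h k = (-1)^k * of_nat (if k = 0 then 0 else n choose (k - 1)) * pochhammer (a + of_nat k) k
                 * pochhammer (c + of_nat k) (Suc n - k)" for k
  have "PP (Suc n) a c = (\<Sum>k\<le>Suc n. g k + h k)"
    unfolding PP_def g_def h_def
    by (intro sum.cong refl) (auto simp: algebra_simps binomial_Suc_Suc gr0_conv_Suc split: nat.splits
        elim!: nat.exhaust[of k for k]) 
  also have "\<dots> = (\<Sum>k\<le>n. g k) + (\<Sum>k\<le>n. h (Suc k))"
  proof -
    have 1: "(\<Sum>k\<le>Suc n. g k) = (\<Sum>k\<le>n. g k)"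
      by (simp add: g_def)
    have 2: "(\<Sum>k\<le>Suc n. h k) = (\<Sum>k\<le>n. h (Suc k))"
      by (simp only: sum.atMost_Suc_shift) (simp add: h_def)
    show ?thesis by (simp only: sum.distrib 1 2)
  qed
  also have "\<dots> = (\<Sum>k\<le>n. g k + h (Suc k))" by (simp add: sum.distrib)
  also have "\<dots> = (\<Sum>k\<le>n. (-1)^k * of_nat (n choose k) * (
       (c + of_nat n) * pochhammer (a + of_nat k) k * pochhammer (c + of_nat k) (n - k)
     - 2 * (c + of_nat n) * pochhammer (a + 1 + of_nat k) k * pochhammer (c + of_nat k) (n - k)
     - (1 + a - 2*c) * pochhammer (a + 1 + of_nat k) k * pochhammer (c + 1 + of_nat k) (n - k)))"
  proof (intro sum.cong refl)
    fix k assume k: "k \<in> {..n}"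
    hence kn: "k \<le> n" by simp
    have e1: "pochhammer (c + of_nat k) (Suc n - k) = (c + of_nat n) * pochhammer (c + of_nat k) (n - k)"
      using kn by (simp add: Suc_diff_le pochhammer_rec' of_nat_diff)
    have e2: "pochhammer (c + of_nat k) (Suc n - k) = (c + of_nat k) * pochhammer (c + 1 + of_nat k) (n - k)"
      using kn by (simp add: Suc_diff_le pochhammer_rec add_ac)
    have e3: "pochhammer (a + of_nat (Suc k)) (Suc k) = (a + 1 + of_nat k + of_nat k) * pochhammer (a + 1 + of_nat k) k"
      by (simp add: pochhammer_rec' add_ac)
    have e4: "pochhammer (c + of_nat (Suc k)) (Suc n - Suc k) = pochhammer (c + 1 + of_nat k) (n - k)"
      by (simp add: add_ac)
    show "g k + h (Suc k) = (-1)^k * of_nat (n choose k) * (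
       (c + of_nat n) * pochhammer (a + of_nat k) k * pochhammer (c + of_nat k) (n - k)
     - 2 * (c + of_nat n) * pochhammer (a + 1 + of_nat k) k * pochhammer (c + of_nat k) (n - k)
     - (1 + a - 2*c) * pochhammer (a + 1 + of_nat k) k * pochhammer (c + 1 + of_nat k) (n - k))"
    proof -
      define A0 where "A0 = pochhammer (a + of_nat k) k"
      define A1 where "A1 = pochhammer (a + 1 + of_nat k) k"
      define Cn where "Cn = pochhammer (c + of_nat k) (n - k)"
      define Y where "Y = pochhammer (c + 1 + of_nat k) (n - k)"
      define s where "s = (-1::complex)^k * of_nat (n choose k)"
      have e5: "(c + of_nat n) * Cn - (c + of_nat k) * Y = 0"
        using e1 e2 unfolding Cn_def Y_def by simp
      have "g k + h (Suc k) = s * (A0 * ((c + of_nat n) * Cn)) - s * ((a + 1 + of_nat k + of_nat k) * A1 * Y)"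
        unfolding g_def h_def s_def A0_def A1_def Cn_def Y_def
        by (simp only: e1 e3 e4 nat.simps diff_Suc_Suc if_False) (simp add: algebra_simps)
      also have "\<dots> = s * ((c + of_nat n) * A0 * Cn - 2 * (c + of_nat n) * A1 * Cn
         - (1 + a - 2*c) * A1 * Y) + 2 * s * A1 * ((c + of_nat n) * Cn - (c + of_nat k) * Y)"
        by (simp add: algebra_simps)
      also have "\<dots> = s * ((c + of_nat n) * A0 * Cn - 2 * (c + of_nat n) * A1 * Cn
         - (1 + a - 2*c) * A1 * Y)" using e5 by simp
      finally show ?thesis unfolding s_def A0_def A1_def Cn_def Y_def by (simp add: mult.assoc)
    qed
  qed
  also have "\<dots> = (c + of_nat n) * PP n a c - 2 * (c + of_nat n) * PP n (a+1) c
                    - (1 + a - 2*c) * PP n (a+1) (c+1)"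
  proof -
    have "(\<Sum>k\<le>n. (-1)^k * of_nat (n choose k) * (
       (c + of_nat n) * pochhammer (a + of_nat k) k * pochhammer (c + of_nat k) (n - k)
     - 2 * (c + of_nat n) * pochhammer (a + 1 + of_nat k) k * pochhammer (c + of_nat k) (n - k)
     - (1 + a - 2*c) * pochhammer (a + 1 + of_nat k) k * pochhammer (c + 1 + of_nat k) (n - k)))
     = (\<Sum>k\<le>n. (c + of_nat n) * ((-1)^k * of_nat (n choose k) * pochhammer (a + of_nat k) k
                 * pochhammer (c + of_nat k) (n - k))
        - 2 * (c + of_nat n) * ((-1)^k * of_nat (n choose k) * pochhammer (a + 1 + of_nat k) k
                 * pochhammer (c + of_nat k) (n - k))
        - (1 + a - 2*c) * ((-1)^k * of_nat (n choose k) * pochhammer (a + 1 + of_nat k) k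
                 * pochhammer (c + 1 + of_nat k) (n - k)))"
      by (intro sum.cong refl) (simp add: algebra_simps)
    then show ?thesis unfolding PP_def by (simp only: sum_subtractf sum_distrib_left)
  qed
  finally show ?thesis .
qed
lemma PP_B:
  "(c + of_nat n) * (PP n (a+1) c + PP n a c) - (2*c-1-a) * PP n (a+1) (c+1)
     - (1 + a + of_nat n) * PP n (a+2) (c+1) = 0"
proof (induction n arbitrary: a c)
  case 0
  then show ?case by (simp add: PP_def algebra_simps)
next
  case (Suc n)
  have "(c + of_nat (Suc n)) * (PP (Suc n) (a+1) c + PP (Suc n) a c) - (2*c-1-a) * PP (Suc n) (a+1) (c+1)
     - (1 + a + of_nat (Suc n)) * PP (Suc n) (a+2) (c+1)
     = (c + of_nat (Suc n)) * ((c + of_nat n) * (PP n (a+1) c + PP n a c) - (2*c-1-a) * PP n (a+1) (c+1)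
     - (1 + a + of_nat n) * PP n (a+2) (c+1))
     - 2 * (c + of_nat (Suc n)) * ((c + of_nat n) * (PP n (a+1+1) c + PP n (a+1) c) - (2*c-1-(a+1)) * PP n (a+1+1) (c+1)
     - (1 + (a+1) + of_nat n) * PP n (a+1+2) (c+1))
     + (2*c-a-1) * ((c + 1 + of_nat n) * (PP n (a+1+1) (c+1) + PP n (a+1) (c+1)) - (2*(c+1)-1-(a+1)) * PP n (a+1+1) (c+1+1)
     - (1 + (a+1) + of_nat n) * PP n (a+1+2) (c+1+1))"
    by (simp add: PP_rec algebra_simps)
  also have "\<dots> = 0"
    using Suc.IH[where a=a and c=c] Suc.IH[where a="a+1" and c=c] Suc.IH[where a="a+1" and c="c+1"]
    by (simp only:) simp
  finally show ?case .
qed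

lemma PP_sym: "PP n a c = (-1)^n * PP n (2*c - of_nat n - 1 - a) c"
proof (induction n arbitrary: a c)
  case 0
  then show ?case by (simp add: PP_def)
next
  case (Suc n)
  define b where "b = 2*c - of_nat (Suc n) - 1 - a"
  have i1: "PP n b c = (-1)^n * PP n (a+1) c"
    using Suc.IH[of b c] by (simp add: b_def algebra_simps)
  have i2: "PP n (b+1) c = (-1)^n * PP n a c"
    using Suc.IH[of "b+1" c] by (simp add: b_def algebra_simps)
  have i3: "PP n (b+1) (c+1) = (-1)^n * PP n (a+2) (c+1)"
    using Suc.IH[of "b+1" "c+1"] by (simp add: b_def algebra_simps)
  have B: "(c + of_nat n) * (PP n (a+1) c + PP n a c) - (2*c-1-a) * PP n (a+1) (c+1)
     - (1 + a + of_nat n) * PP n (a+2) (c+1) = 0" by (rule PP_B)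
  have "(-1)^Suc n * PP (Suc n) b c = (-1)^Suc n * ((c + of_nat n) * PP n b c - 2 * (c + of_nat n) * PP n (b+1) c
                    - (1 + b - 2*c) * PP n (b+1) (c+1))" by (simp add: PP_rec)
  also have "\<dots> = - ((-1)^n * (-1)^n) * ((c + of_nat n) * PP n (a+1) c - 2 * (c + of_nat n) * PP n a c
                    - (1 + b - 2*c) * PP n (a+2) (c+1))" by (simp only: i1 i2 i3) (simp add: algebra_simps)
  also have "(-1::complex)^n * (-1)^n = 1" by (simp flip: power_add)
  also have "- 1 * ((c + of_nat n) * PP n (a+1) c - 2 * (c + of_nat n) * PP n a c
                    - (1 + b - 2*c) * PP n (a+2) (c+1)) = PP (Suc n) a c"
    using B by (simp add: PP_rec b_def algebra_simps)
  finally show ?case by (simp add: b_def)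
qed
lemma hyp_PP:
  assumes hx: "\<forall>m::nat. x \<noteq> - of_nat m" and hc: "\<forall>m::nat. c \<noteq> - of_nat m"
  shows "hyperg [- of_nat n, x / 2, (x + 1) / 2] [x, c] 4 = PP n x c / pochhammer c n"
proof -
  define f where "f k = pochhammer (- of_nat n) k * (pochhammer (x/2) k * pochhammer ((x+1)/2) k)
      / (fact k * (pochhammer x k * pochhammer c k)) * 4 ^ k" for k
  have "hyperg [- of_nat n, x / 2, (x + 1) / 2] [x, c] 4 = (\<Sum>k. f k)"
    unfolding hyperg_def f_def by simp
  also have "\<dots> = (\<Sum>k\<le>n. f k)"
    by (rule suminf_finite) (auto simp: f_def pochhammer_of_nat_eq_0_iff)
  also have "\<dots> = (\<Sum>k\<le>n. (-1)^k * of_nat (n choose k) * pochhammer (x + of_nat k) k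
                 * pochhammer (c + of_nat k) (n - k) / pochhammer c n)"
  proof (intro sum.cong refl)
    fix k assume "k \<in> {..n}"
    hence kn: "k \<le> n" by simp
    have d1: "pochhammer x (2*k) = 4^k * pochhammer (x/2) k * pochhammer ((x+1)/2) k"
      using pochhammer_double[of "x/2" k]
      by (simp add: add_divide_distrib power_mult)
    have d2: "pochhammer x (2*k) = pochhammer x k * pochhammer (x + of_nat k) k"
      using pochhammer_product'[of x k k] by (simp add: mult_2)
    have d3: "pochhammer (- of_nat n :: complex) k = (-1)^k * of_nat (n choose k) * fact k"
    proof -
      have s1: "(-1::complex)^k * (-1)^k = 1" by (simp flip: power_mult_distrib)
      have s2: "fact k * (of_nat n gchoose k) = (-1)^k * pochhammer (- of_nat n :: complex) k"
        using gbinomial_pochhammer[of "of_nat n :: complex" k] by (simp add: field_simps)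
      have "pochhammer (- of_nat n :: complex) k = ((-1)^k * (-1)^k) * pochhammer (- of_nat n :: complex) k"
        by (simp only: s1) simp
      also have "\<dots> = (-1)^k * (fact k * (of_nat n gchoose k))" by (simp only: s2 mult.assoc)
      finally show ?thesis by (simp add: binomial_gbinomial)
    qed
    have d4: "pochhammer c n = pochhammer c k * pochhammer (c + of_nat k) (n - k)"
      by (rule pochhammer_product[OF kn])
    have nx: "pochhammer x k \<noteq> 0" using hx by (auto simp: pochhammer_eq_0_iff)
    have ncn: "pochhammer c n \<noteq> 0" using hc by (auto simp: pochhammer_eq_0_iff)
    have nc: "pochhammer c k \<noteq> 0" "pochhammer (c + of_nat k) (n - k) \<noteq> 0" using ncn d4 by auto
    have "f k = (pochhammer (- of_nat n) k * (4^k * pochhammer (x/2) k * pochhammer ((x+1)/2) k))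
      / (fact k * (pochhammer x k * pochhammer c k))"
      unfolding f_def by (simp add: field_simps)
    also have "\<dots> = ((-1)^k * of_nat (n choose k) * fact k * (pochhammer x k * pochhammer (x + of_nat k) k))
      / (fact k * (pochhammer x k * pochhammer c k))"
      by (simp only: d3 d1[symmetric] d2)
    also have "\<dots> = (-1)^k * of_nat (n choose k) * pochhammer (x + of_nat k) k / pochhammer c k"
      using nx nc by (simp add: field_simps)
    also have "\<dots> = (-1)^k * of_nat (n choose k) * pochhammer (x + of_nat k) k
                 * pochhammer (c + of_nat k) (n - k) / pochhammer c n"
      using nc by (simp add: d4 field_simps)
    finally show "f k = \<dots>" .
  qed
  also have "\<dots> = PP n x c / pochhammer c n"
    unfolding PP_def by (simp add: sum_divide_distrib)
  finally show ?thesis .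
qed

theorem mainTheorem8:
  fixes n :: nat and a c :: complex
  assumes "\<forall>m::nat. a \<noteq> - of_nat m"
      and "\<forall>m::nat. c \<noteq> - of_nat m"
      and "\<forall>m::nat. 2 * c - a - of_nat n - 1 \<noteq> - of_nat m"
  shows "hyperg [- of_nat n, a / 2, (a + 1) / 2] [a, c] 4 =
         (-1) ^ n * hyperg [- of_nat n, (2 * c - a - of_nat n - 1) / 2, (2 * c - a - of_nat n) / 2]
                           [2 * c - a - of_nat n - 1, c] 4"
proof -
  define b where "b = 2 * c - a - of_nat n - 1"
  have eb: "(2 * c - a - of_nat n) / 2 = (b + 1) / 2" by (simp add: b_def)
  have "hyperg [- of_nat n, a / 2, (a + 1) / 2] [a, c] 4 = PP n a c / pochhammer c n"
    by (rule hyp_PP[OF assms(1,2)])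
  also have "PP n a c = (-1)^n * PP n b c"
    using PP_sym[of n a c] by (simp add: b_def algebra_simps)
  also have "(-1)^n * PP n b c / pochhammer c n = (-1)^n * (PP n b c / pochhammer c n)" by simp
  also have "PP n b c / pochhammer c n = hyperg [- of_nat n, b / 2, (b + 1) / 2] [b, c] 4"
    by (rule hyp_PP[symmetric]) (use assms(2,3) in \<open>auto simp: b_def\<close>)
  finally show ?thesis by (simp only: eb b_def)
qed
end
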